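(* Let $k\ge 2$ and let $\mathcal{T}_k$ be the graph with vertex set $\{a_1,\ldots,a_{k-1},b_1,\ldots,b_k,c_1,\ldots,c_{k-1},d_1,\ldots,d_{2k-3}\}$ whose edges are exactly: all pairs of distinct vertices in $\{a_1,\ldots,a_{k-1},b_1,\ldots,b_k\}$ (a clique $K_{2k-1}$); all pairs $b_ic_j$ ($1\le i\le k$, $1\le j\le k-1$); all pairs $c_id_j$ ($1\le i\le k-1$, $1\le j\le 2k-3$); the pairs $a_id_j$ for $1\le i\le k-1$ and $i\le j\le k-1$; and the pairs $b_id_j$ for $3\le i\le k$ and $k\le j\le k+i-3$. Then $\mathcal{T}_k$ is uniquely $k$-list colorable.
   Context: All graphs are finite, simple and undirected. A list assignment $L$ for a graph $G$ assigns to each vertex $v$ a set $L(v)$ of colors; an $L$-coloring is a proper vertex coloring $c$ of $G$ with $c(v)\in L(v)$ for every vertex $v$. A $k$-list assignment is a list assignment with $|L(v)|=k$ for all $v$. $G$ is uniquely $k$-list colorable (U$k$LC) if there exists a $k$-list assignment $L$ such that $G$ has exactly one $L$-coloring. *)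

theory Defs
  imports Main
begin

(* A finite simple graph given by a vertex set V and a symmetric irreflexive edge
   relation E (only edges between vertices of V matter). *)

definition L_coloring :: "'v set \<Rightarrow> ('v \<Rightarrow> 'v \<Rightarrow> bool) \<Rightarrow> ('v \<Rightarrow> 'c set) \<Rightarrow> ('v \<Rightarrow> 'c) \<Rightarrow> bool" where
  "L_coloring V E L c \<longleftrightarrow>
     (\<forall>v\<in>V. c v \<in> L v) \<and> (\<forall>u\<in>V. \<forall>v\<in>V. E u v \<longrightarrow> c u \<noteq> c v)"

definition uniquely_list_colorable :: "nat \<Rightarrow> 'v set \<Rightarrow> ('v \<Rightarrow> 'v \<Rightarrow> bool) \<Rightarrow> bool" where
  "uniquely_list_colorable k V E \<longleftrightarrow>
     (\<exists>L :: 'v \<Rightarrow> nat set. (\<forall>v\<in>V. finite (L v) \<and> card (L v) = k) \<and>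
        (\<exists>c. L_coloring V E L c \<and>
           (\<forall>c'. L_coloring V E L c' \<longrightarrow> (\<forall>v\<in>V. c' v = c v))))"

datatype tvert = A nat | B nat | C nat | D nat

definition T_vertices :: "nat \<Rightarrow> tvert set" where
  "T_vertices k = A ` {1..k-1} \<union> B ` {1..k} \<union> C ` {1..k-1} \<union> D ` {1..2*k-3}"

fun T_arc :: "nat \<Rightarrow> tvert \<Rightarrow> tvert \<Rightarrow> bool" where
  "T_arc k (A i) (A j) = (i \<noteq> j)"
| "T_arc k (B i) (B j) = (i \<noteq> j)"
| "T_arc k (A i) (B j) = True"
| "T_arc k (B i) (C j) = True"
| "T_arc k (C i) (D j) = True"
| "T_arc k (A i) (D j) = (i \<le> j \<and> j \<le> k - 1)"
| "T_arc k (B i) (D j) = (3 \<le> i \<and> k \<le> j \<and> j + 3 \<le> k + i)"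
| "T_arc k _ _ = False"

definition T_edge :: "nat \<Rightarrow> tvert \<Rightarrow> tvert \<Rightarrow> bool" where
  "T_edge k u v \<longleftrightarrow> u \<in> T_vertices k \<and> v \<in> T_vertices k \<and> (T_arc k u v \<or> T_arc k v u)"

end

theory Submission
  imports Defs
begin

definition col :: "nat \<Rightarrow> tvert \<Rightarrow> nat" where
  "col k v = (case v of A i \<Rightarrow> i | B i \<Rightarrow> k + i - 1 | C j \<Rightarrow> 2*k + j | D j \<Rightarrow> min (j+1) k)"

definition LL :: "nat \<Rightarrow> tvert \<Rightarrow> nat set" where
  "LL k v = (case v of A i \<Rightarrow> {1..k}
     | B i \<Rightarrow> (if i = 1 then {1..k} else insert (k+i-1) {1..k-1})
     | C j \<Rightarrow> insert (2*k+j) {k+1..2*k-1}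
     | D j \<Rightarrow> insert (min (j+1) k) {2*k+1..3*k-1})"

lemma memA: "A i \<in> T_vertices k \<longleftrightarrow> 1 \<le> i \<and> i \<le> k-1" by (auto simp: T_vertices_def)
lemma memB: "B i \<in> T_vertices k \<longleftrightarrow> 1 \<le> i \<and> i \<le> k" by (auto simp: T_vertices_def)
lemma memC: "C i \<in> T_vertices k \<longleftrightarrow> 1 \<le> i \<and> i \<le> k-1" by (auto simp: T_vertices_def)
lemma memD: "D i \<in> T_vertices k \<longleftrightarrow> 1 \<le> i \<and> i \<le> 2*k-3" by (auto simp: T_vertices_def)

lemma card_LL:
  assumes "k \<ge> 2" "v \<in> T_vertices k"
  shows "finite (LL k v) \<and> card (LL k v) = k"
proof (cases v)
  case (A i) then show ?thesis by (simp add: LL_def)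
next
  case (B i)
  show ?thesis
  proof (cases "i = 1")
    case True then show ?thesis using B by (simp add: LL_def)
  next
    case False
    then have "k + i - 1 \<notin> {1..k-1}" using B assms by (auto simp: memB)
    then show ?thesis using B False assms by (simp add: LL_def card_insert_disjoint)
  qed
next
  case (C j) then show ?thesis using assms by (auto simp: LL_def memC)
next
  case (D j) then show ?thesis using assms by (auto simp: LL_def memD)
qed

lemma col_ok:
  assumes "k \<ge> 2"
  shows "L_coloring (T_vertices k) (T_edge k) (LL k) (col k)"
  unfolding L_coloring_def
proof (intro conjI ballI impI)
  fix v assume "v \<in> T_vertices k"
  then show "col k v \<in> LL k v" using assms
    by (cases v) (auto simp: LL_def col_def memA memB memC memD)
next
  fix u v assume "u \<in> T_vertices k" "v \<in> T_vertices k" "T_edge k u v"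
  then show "col k u \<noteq> col k v" using assms
    by (cases u; cases v) (auto simp: T_edge_def col_def memA memB memC memD)
qed

theorem mainTheorem19:
  fixes k :: nat
  assumes "k \<ge> 2"
  shows "uniquely_list_colorable k (T_vertices k) (T_edge k)"
  unfolding uniquely_list_colorable_def
proof (intro exI conjI ballI allI impI)
  fix v assume "v \<in> T_vertices k"
  then show "finite (LL k v)" "card (LL k v) = k" using card_LL assms by auto
next
  show "L_coloring (T_vertices k) (T_edge k) (LL k) (col k)" using col_ok assms .
next
  fix c' v
  assume c': "L_coloring (T_vertices k) (T_edge k) (LL k) c'" and v: "v \<in> T_vertices k"
  have inL: "\<And>v. v \<in> T_vertices k \<Longrightarrow> c' v \<in> LL k v" using c' unfolding L_coloring_def by blast
  have pr: "\<And>u v. u \<in> T_vertices k \<Longrightarrow> v \<in> T_vertices k \<Longrightarrow> T_edge k u v \<Longrightarrow> c' u \<noteq> c' v"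
    using c' unfolding L_coloring_def by blast
  define X where "X = insert (B 1) (A ` {1..k-1})"
  have Xsub: "X \<subseteq> T_vertices k" using assms by (auto simp: X_def memA memB)
  have "card (A ` {1..k-1}) = k - 1" by (simp add: card_image inj_on_def)
  then have cardX: "card X = k" using assms
    by (simp add: X_def card_insert_disjoint image_iff)
  have injX: "inj_on c' X"
  proof (rule inj_onI)
    fix x y assume "x \<in> X" "y \<in> X" "c' x = c' y"
    show "x = y"
    proof (rule ccontr)
      assume "x \<noteq> y"
      then have "T_edge k x y" using \<open>x \<in> X\<close> \<open>y \<in> X\<close> Xsub
        by (auto simp: X_def T_edge_def)
      then show False using pr \<open>x \<in> X\<close> \<open>y \<in> X\<close> Xsub \<open>c' x = c' y\<close> by blast
    qed
  qed
  have imX: "c' ` X \<subseteq> {1..k}"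
  proof
    fix y assume "y \<in> c' ` X"
    then obtain x where "x \<in> X" "y = c' x" by blast
    then show "y \<in> {1..k}" using inL[of x] Xsub by (auto simp: X_def LL_def)
  qed
  have imX2: "c' ` X = {1..k}"
    by (rule card_subset_eq) (use imX injX cardX card_image in auto)
  have used: "\<And>m. 1 \<le> m \<Longrightarrow> m \<le> k \<Longrightarrow> \<exists>x\<in>X. c' x = m" using imX2 by (metis atLeastAtMost_iff imageE)
  have stepB: "\<And>i. 2 \<le> i \<Longrightarrow> i \<le> k \<Longrightarrow> c' (B i) = k + i - 1"
  proof -
    fix i assume i: "2 \<le> i" "i \<le> k"
    have Bi: "B i \<in> T_vertices k" using i by (simp add: memB)
    have "c' (B i) \<in> insert (k+i-1) {1..k-1}" using inL[OF Bi] i by (simp add: LL_def)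
    moreover have "c' (B i) \<notin> {1..k-1}"
    proof
      assume "c' (B i) \<in> {1..k-1}"
      then have "1 \<le> c' (B i)" "c' (B i) \<le> k" by auto
      then obtain x where x: "x \<in> X" "c' x = c' (B i)" using used by blast
      have "T_edge k x (B i)" using x(1) Xsub Bi i by (auto simp: X_def T_edge_def)
      then show False using pr x Xsub Bi by blast
    qed
    ultimately show "c' (B i) = k + i - 1" by blast
  qed
  have stepC: "\<And>j. 1 \<le> j \<Longrightarrow> j \<le> k-1 \<Longrightarrow> c' (C j) = 2*k + j"
  proof -
    fix j assume j: "1 \<le> j" "j \<le> k-1"
    have Cj: "C j \<in> T_vertices k" using j by (simp add: memC)
    have "c' (C j) \<in> insert (2*k+j) {k+1..2*k-1}" using inL[OF Cj] by (simp add: LL_def)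
    moreover have "c' (C j) \<notin> {k+1..2*k-1}"
    proof
      assume h: "c' (C j) \<in> {k+1..2*k-1}"
      define i where "i = c' (C j) + 1 - k"
      have i: "2 \<le> i" "i \<le> k" "k + i - 1 = c' (C j)" using h by (auto simp: i_def)
      have Bi: "B i \<in> T_vertices k" using i by (simp add: memB)
      have "T_edge k (B i) (C j)" using Bi Cj by (simp add: T_edge_def)
      then show False using pr[OF Bi Cj] stepB[OF i(1,2)] i(3) by simp
    qed
    ultimately show "c' (C j) = 2*k + j" by blast
  qed
  have stepD: "\<And>j. 1 \<le> j \<Longrightarrow> j \<le> 2*k-3 \<Longrightarrow> c' (D j) = min (j+1) k"
  proof -
    fix j assume j: "1 \<le> j" "j \<le> 2*k-3"
    have Dj: "D j \<in> T_vertices k" using j by (simp add: memD)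
    have "c' (D j) \<in> insert (min (j+1) k) {2*k+1..3*k-1}" using inL[OF Dj] by (simp add: LL_def)
    moreover have "c' (D j) \<notin> {2*k+1..3*k-1}"
    proof
      assume h: "c' (D j) \<in> {2*k+1..3*k-1}"
      define m where "m = c' (D j) - 2*k"
      have m: "1 \<le> m" "m \<le> k-1" "2*k + m = c' (D j)" using h by (auto simp: m_def)
      have Cm: "C m \<in> T_vertices k" using m by (simp add: memC)
      have "T_edge k (C m) (D j)" using Cm Dj by (simp add: T_edge_def)
      then show False using pr[OF Cm Dj] stepC[OF m(1,2)] m(3) by simp
    qed
    ultimately show "c' (D j) = min (j+1) k" by blast
  qed
  have stepA: "\<And>i. 1 \<le> i \<Longrightarrow> i \<le> k-1 \<Longrightarrow> c' (A i) = i"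
  proof -
    fix i show "1 \<le> i \<Longrightarrow> i \<le> k-1 \<Longrightarrow> c' (A i) = i"
    proof (induction i rule: less_induct)
      case (less i)
      have Ai: "A i \<in> T_vertices k" using less.prems by (simp add: memA)
      have r: "c' (A i) \<in> {1..k}" using inL[OF Ai] by (simp add: LL_def)
      have nk: "c' (A i) \<noteq> k"
      proof
        assume h: "c' (A i) = k"
        have Dk: "D (k-1) \<in> T_vertices k" using assms by (auto simp: memD)
        have "T_edge k (A i) (D (k-1))" using Ai Dk less.prems by (simp add: T_edge_def)
        moreover have "c' (D (k-1)) = k" using stepD[of "k-1"] assms by simp
        ultimately show False using pr[OF Ai Dk] h by simp
      qed
      have nhi: "\<not> (i < c' (A i) \<and> c' (A i) \<le> k-1)"
      proof
        assume h: "i < c' (A i) \<and> c' (A i) \<le> k-1"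
        define j where "j = c' (A i) - 1"
        have j: "1 \<le> j" "i \<le> j" "j \<le> k-1" "min (j+1) k = c' (A i)" using h less.prems by (auto simp: j_def)
        have Dj: "D j \<in> T_vertices k" using j by (simp add: memD)
        have "T_edge k (A i) (D j)" using Ai Dj j by (simp add: T_edge_def)
        then show False using pr[OF Ai Dj] stepD[of j] j by simp
      qed
      have nlo: "\<not> (c' (A i) < i)"
      proof
        assume h: "c' (A i) < i"
        define m where "m = c' (A i)"
        have m: "1 \<le> m" "m < i" using h r by (auto simp: m_def)
        have Am: "A m \<in> T_vertices k" using m less.prems by (simp add: memA)
        have "c' (A m) = m" using less.IH[of m] m less.prems by simp
        moreover have "T_edge k (A i) (A m)" using Ai Am m by (simp add: T_edge_def)
        ultimately show False using pr[OF Ai Am] m_def by simp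
      qed
      show ?case using r nk nhi nlo by auto
    qed
  qed
  have stepB1: "c' (B 1) = k"
  proof -
    have B1: "B 1 \<in> T_vertices k" using assms by (simp add: memB)
    have r: "c' (B 1) \<in> {1..k}" using inL[OF B1] by (simp add: LL_def)
    have "\<not> c' (B 1) \<le> k-1"
    proof
      assume h: "c' (B 1) \<le> k-1"
      define m where "m = c' (B 1)"
      have m: "1 \<le> m" "m \<le> k-1" using h r by (auto simp: m_def)
      have Am: "A m \<in> T_vertices k" using m by (simp add: memA)
      have "T_edge k (B 1) (A m)" using B1 Am by (simp add: T_edge_def)
      then show False using pr[OF B1 Am] stepA[OF m] m_def by simp
    qed
    then show ?thesis using r by auto
  qed
  show "c' v = col k v"
  proof (cases v)
    case (A i) then show ?thesis using v stepA by (simp add: memA col_def)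
  next
    case (B i) then show ?thesis using v stepB stepB1
      by (cases "i = 1") (auto simp: memB col_def)
  next
    case (C j) then show ?thesis using v stepC by (simp add: memC col_def)
  next
    case (D j) then show ?thesis using v stepD by (simp add: memD col_def)
  qed
qed

end
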